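(* Let $n\ge1$ be an integer. There exists a constant $c_1=c_1(n)>0$ such that for all pairwise distinct points $z_1,z_2,z_3\in\mathbb{R}^2$, $$p_1(z_1,z_2,z_3)+p_2(z_1,z_2,z_3)\ge c_1\,c(z_1,z_2,z_3)^2.$$
   Context: For $i=1,2$ and $x\in\mathbb{R}^2\setminus\{0\}$, $K_i(x)=x_i^{2n-1}/|x|^{2n}$, and $p_i(z_1,z_2,z_3)=K_i(z_1-z_2)K_i(z_1-z_3)+K_i(z_2-z_1)K_i(z_2-z_3)+K_i(z_3-z_1)K_i(z_3-z_2)$. The Menger curvature $c(z_1,z_2,z_3)$ is the inverse of the radius of the circle through $z_1,z_2,z_3$ (equal to $0$ if the points are collinear). *)

theory Defs
  imports "HOL-Analysis.Analysis"
begin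

definition Kern :: "nat \<Rightarrow> 2 \<Rightarrow> real^2 \<Rightarrow> real" where
  "Kern n i x = (x $ i) ^ (2*n - 1) / (norm x) ^ (2*n)"

definition pK :: "nat \<Rightarrow> 2 \<Rightarrow> real^2 \<Rightarrow> real^2 \<Rightarrow> real^2 \<Rightarrow> real" where
  "pK n i z1 z2 z3 =
     Kern n i (z1 - z2) * Kern n i (z1 - z3)
   + Kern n i (z2 - z1) * Kern n i (z2 - z3)
   + Kern n i (z3 - z1) * Kern n i (z3 - z2)"

definition menger_curv :: "real^2 \<Rightarrow> real^2 \<Rightarrow> real^2 \<Rightarrow> real" where
  "menger_curv z1 z2 z3 =
     (if collinear {z1, z2, z3} then 0
      else 1 / (THE r. \<exists>w. dist w z1 = r \<and> dist w z2 = r \<and> dist w z3 = r))"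

end

theory Submission
  imports Defs
begin

lemma sum_ge_last:
  fixes f :: "nat \<Rightarrow> real"
  assumes "\<And>i. i < Suc m \<Longrightarrow> f i \<ge> 0"
  shows "(\<Sum>i<Suc m. f i) \<ge> f m"
proof -
  have "sum f {..<m} \<ge> 0" by (rule sum_nonneg) (use assms in auto)
  then show ?thesis by simp
qed

lemma keyF:
  fixes y1 y2 w L1 L2 d :: real and m :: nat
  assumes y2: "0 \<le> y2" "y2 \<le> y1" "y2 \<le> w" and w: "0 \<le> w" and L: "0 \<le> L1" "0 \<le> L2"
    and d: "0 \<le> d" and rel: "L1*(w - y1) + L2*(w - y2) = d*w"
  shows "L2*y1^m*(w^(m+1) - y2^(m+1)) + L1*y2^m*(w^(m+1) - y1^(m+1))
          \<ge> y2^m*w^(m+1)*d + L2*(w-y2)*w^m*(y1^m - y2^m)"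
proof -
  define S1 where "S1 = (\<Sum>i<Suc m. y1^(m - i) * w^i)"
  define S2 where "S2 = (\<Sum>i<Suc m. y2^(m - i) * w^i)"
  have e1: "w^(m+1) - y1^(m+1) = (w - y1) * S1"
    unfolding S1_def using power_diff_sumr2[of w "Suc m" y1] by simp
  have e2: "w^(m+1) - y2^(m+1) = (w - y2) * S2"
    unfolding S2_def using power_diff_sumr2[of w "Suc m" y2] by simp
  have y1: "0 \<le> y1" using y2 by linarith
  have S1ge: "S1 \<ge> w^m" unfolding S1_def
    using sum_ge_last[of m "\<lambda>i. y1^(m - i) * w^i"] y1 w by simp
  have diff: "y1^m * S2 - y2^m * S1 = (\<Sum>i<Suc m. w^i * (y1^m * y2^(m-i) - y2^m * y1^(m-i)))"
    unfolding S1_def S2_def by (simp add: sum_distrib_left sum_subtractf algebra_simps)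
  have tm: "w^i * (y1^m * y2^(m-i) - y2^m * y1^(m-i)) \<ge> 0" if "i < Suc m" for i
  proof -
    have "y1^m * y2^(m-i) - y2^m * y1^(m-i) = (y1*y2)^(m-i) * (y1^i - y2^i)"
    proof -
      have "y1^m = y1^i * y1^(m-i)" "y2^m = y2^i * y2^(m-i)" using that
        by (simp_all add: power_add[symmetric])
      then show ?thesis by (simp add: power_mult_distrib algebra_simps)
    qed
    moreover have "y1^i - y2^i \<ge> 0" using power_mono[OF y2(2) y2(1)] by simp
    ultimately show ?thesis using w y1 y2 by simp
  qed
  have diffge: "y1^m * S2 - y2^m * S1 \<ge> w^m * (y1^m - y2^m)"
    unfolding diff using sum_ge_last[of m "\<lambda>i. w^i * (y1^m * y2^(m-i) - y2^m * y1^(m-i))"] tm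
    by simp
  have F: "L2*y1^m*(w^(m+1) - y2^(m+1)) + L1*y2^m*(w^(m+1) - y1^(m+1))
        = y2^m*S1*d*w + L2*(w-y2)*(y1^m * S2 - y2^m * S1)"
  proof -
    have "L1*(w-y1) = d*w - L2*(w-y2)" using rel by linarith
    then have "L1*y2^m*((w - y1) * S1) = y2^m*S1*(d*w - L2*(w-y2))" by (metis mult.commute mult.left_commute)
    then show ?thesis unfolding e1 e2 by (simp add: algebra_simps)
  qed
  have a: "y2^m*S1*d*w \<ge> y2^m*w^m*d*w"
    using S1ge y2 w d by (intro mult_right_mono mult_left_mono) auto
  have b: "L2*(w-y2)*(y1^m * S2 - y2^m * S1) \<ge> L2*(w-y2)*(w^m * (y1^m - y2^m))"
    using diffge L y2 by (intro mult_left_mono) auto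
  show ?thesis unfolding F using a b by (simp add: algebra_simps)
qed


definition kk :: "nat \<Rightarrow> real \<Rightarrow> real \<Rightarrow> real" where
  "kk m x L = x^m / L^(m+1)"

definition EE :: "nat \<Rightarrow> real \<Rightarrow> real \<Rightarrow> real \<Rightarrow> real \<Rightarrow> real \<Rightarrow> real \<Rightarrow> real" where
  "EE m x1 L1 x2 L2 x3 L3 = -(kk m x1 L1 * kk m x2 L2 + kk m x2 L2 * kk m x3 L3 + kk m x3 L3 * kk m x1 L1)"

definition good :: "real \<Rightarrow> real \<Rightarrow> real \<Rightarrow> real \<Rightarrow> real \<Rightarrow> real \<Rightarrow> bool" where
  "good x1 L1 x2 L2 x3 L3 = (\<exists>Lm. L1 \<le> Lm \<and> L2 \<le> Lm \<and> L3 \<le> Lm \<and>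
      (\<bar>x1\<bar> \<ge> Lm/2 \<or> \<bar>x2\<bar> \<ge> Lm/2 \<or> \<bar>x3\<bar> \<ge> Lm/2))"

lemma bracket:
  fixes y1 y2 w :: real and m :: nat
  assumes "0 \<le> y2" "y2 \<le> y1" "y2 \<le> w" "w \<ge> 1/2" "y1 \<ge> 1/4" "m \<ge> 1"
  shows "y2^m * w^(m+1) / 6 + (w-y2)*w^m*(y1^m - y2^m) \<ge> w / (6*16^m)"
proof -
  have w0: "w > 0" using assms by linarith
  have s2: "(w-y2)*w^m*(y1^m - y2^m) \<ge> 0"
    using assms power_mono[of y2 y1 m] by (intro mult_nonneg_nonneg) auto
  have s1: "y2^m * w^(m+1) / 6 \<ge> 0" using assms by simp
  have p16: "(1/16::real)^m = 1/16^m" by (simp add: power_divide)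
  show ?thesis
  proof (cases "y2 \<ge> y1/2")
    case True
    then have "y2 \<ge> 1/8" using assms by linarith
    then have "y2*w \<ge> (1/8)*(1/2)" using assms by (intro mult_mono) auto
    then have "y2*w \<ge> 1/16" by simp
    then have "(y2*w)^m \<ge> (1/16)^m" by (intro power_mono) auto
    then have "y2^m*w^m \<ge> 1/16^m" by (simp add: power_mult_distrib p16)
    then have "y2^m * w^(m+1) / 6 \<ge> w/(6*16^m)" using w0
      by (simp add: field_simps)
    then show ?thesis using s2 by linarith
  next
    case False
    show ?thesis
    proof (cases "y2 \<le> w/2")
      case True
      have "y2^m \<le> (y1/2)^m" using False assms by (intro power_mono) auto
      also have "\<dots> = y1^m / 2^m" by (simp add: power_divide)
      also have "\<dots> \<le> y1^m / 2"
        using assms by (intro divide_left_mono) (auto simp: self_le_power[of 2 m] order_trans[OF _ self_le_power])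
      finally have d: "y1^m - y2^m \<ge> y1^m/2" by simp
      have "w*y1 \<ge> (1/2)*(1/4)" using assms by (intro mult_mono) auto
      then have "w*y1 \<ge> 1/8" by simp
      then have "(w*y1)^m \<ge> (1/8)^m" by (intro power_mono) auto
      also have "(1/8::real)^m \<ge> (1/16)^m" by (intro power_mono) auto
      finally have wy: "w^m*y1^m \<ge> 1/16^m" by (simp add: power_mult_distrib p16)
      have "(w-y2)*w^m*(y1^m - y2^m) \<ge> (w/2)*w^m*(y1^m/2)"
        using True d assms by (intro mult_mono) auto
      also have "(w/2)*w^m*(y1^m/2) = w*(w^m*y1^m)/4" by simp
      also have "\<dots> \<ge> w*(1/16^m)/4" using wy w0 by (intro divide_right_mono mult_left_mono) auto
      finally have "(w-y2)*w^m*(y1^m - y2^m) \<ge> w/(4*16^m)" by simp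
      moreover have "w/(4*16^m) \<ge> w/(6*16^m)" using w0 by (intro divide_left_mono) auto
      ultimately show ?thesis using s1 by linarith
    next
      case False
      then have "y2 \<ge> 1/4" using assms by linarith
      then have "y2*w \<ge> (1/4)*(1/2)" using assms by (intro mult_mono) auto
      then have "y2*w \<ge> 1/16" by simp
      then have "(y2*w)^m \<ge> (1/16)^m" by (intro power_mono) auto
      then have "y2^m*w^m \<ge> 1/16^m" by (simp add: power_mult_distrib p16)
      then have "y2^m * w^(m+1) / 6 \<ge> w/(6*16^m)" using w0
        by (simp add: field_simps)
      then show ?thesis using s2 by linarith
    qed
  qed
qed


lemma core0:
  fixes m :: nat and x1 x2 x3 L1 L2 L3 D :: real
  assumes m: "odd m" and x: "0 \<le> x1" "0 \<le> x2" "x3 = -(x1+x2)"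
    and L: "0 < L1" "0 < L2" "0 < L3"
    and xl: "x1 \<le> L1" "x2 \<le> L2" "x1 + x2 \<le> L3"
    and ord: "x2 * L1 \<le> x1 * L2"
    and D: "0 \<le> D" "D \<le> (L1+L2-L3)*(L1+L2+L3)*L1*L2" "D \<le> L1*L2*L2*L3"
  shows "EE m x1 L1 x2 L2 x3 L3 \<ge> 0 \<and>
    (good x1 L1 x2 L2 x3 L3 \<longrightarrow> EE m x1 L1 x2 L2 x3 L3 \<ge> D / (6*16^m*(L1*L2*L3)^2))"
proof (cases "x1 + x2 = 0")
  case True
  then have z: "x1 = 0" "x2 = 0" "x3 = 0" using x by auto
  have m0: "m \<noteq> 0" using m by (cases m) auto
  have "EE m x1 L1 x2 L2 x3 L3 = 0" using z m0 by (simp add: EE_def kk_def zero_power)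
  moreover have "\<not> good x1 L1 x2 L2 x3 L3" using z L by (auto simp: good_def)
  ultimately show ?thesis by simp
next
  case False
  define X where "X = x1 + x2"
  have X0: "X > 0" using False x X_def by linarith
  define y1 where "y1 = x1/L1"
  define y2 where "y2 = x2/L2"
  define w where "w = X/L3"
  define d where "d = L1+L2-L3"
  have m1: "m \<ge> 1" using m by (cases m) auto
  have w0: "w > 0" using X0 L by (simp add: w_def)
  have y10: "y1 \<ge> 0" "y2 \<ge> 0" using x L by (simp_all add: y1_def y2_def)
  have PL: "(L1+L2+L3)*L1*L2 > 0" using L by simp
  have d0: "d \<ge> 0"
  proof (rule ccontr)
    assume "\<not> d \<ge> 0"
    then have "d * ((L1+L2+L3)*L1*L2) < 0" using PL by (simp add: mult_neg_pos)
    then show False using D unfolding d_def by (simp add: algebra_simps)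
  qed
  have y21: "y2 \<le> y1" using ord L unfolding y1_def y2_def by (simp add: divide_simps algebra_simps)
  have x1e: "x1 = y1*L1" "x2 = y2*L2" "X = w*L3" using L by (simp_all add: y1_def y2_def w_def)
  have rel: "L1*(w - y1) + L2*(w - y2) = d*w"
    using x1e X_def unfolding d_def by (simp add: algebra_simps)
  have y2w: "y2 \<le> w"
  proof (rule ccontr)
    assume "\<not> y2 \<le> w"
    then have "L1*(w - y1) < 0" "L2*(w-y2) < 0" using y21 L by (simp_all add: mult_pos_neg)
    moreover have "d*w \<ge> 0" using d0 w0 by simp
    ultimately show False using rel by linarith
  qed
  have mo: "(-X)^m = - (X^m)" using m by simp
  define M where "M = w^m*(y1^m*L2 + y2^m*L1) - y1^m*y2^m*L3"
  have EEM: "EE m x1 L1 x2 L2 x3 L3 = M / (L1*L2*L3)"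
  proof -
    have k1: "kk m x1 L1 = y1^m / L1" using L by (simp add: kk_def y1_def power_divide)
    have k2: "kk m x2 L2 = y2^m / L2" using L by (simp add: kk_def y2_def power_divide)
    have k3: "kk m x3 L3 = - (w^m / L3)" using L x(3) mo
      by (simp add: kk_def w_def power_divide X_def)
    show ?thesis unfolding EE_def k1 k2 k3 M_def using L by (simp add: field_simps)
  qed
  have wM: "w*M = L2*y1^m*(w^(m+1) - y2^(m+1)) + L1*y2^m*(w^(m+1) - y1^(m+1))"
  proof -
    have "L3*w = y1*L1 + y2*L2" using x1e X_def by (simp add: algebra_simps)
    moreover have "w*M = w^(m+1)*(y1^m*L2 + y2^m*L1) - y1^m*y2^m*(L3*w)"
      unfolding M_def by (simp add: algebra_simps)
    ultimately have "w*M = w^(m+1)*(y1^m*L2 + y2^m*L1) - y1^m*y2^m*(y1*L1 + y2*L2)"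
      by simp
    then show ?thesis by (simp add: algebra_simps)
  qed
  have G: "w*M \<ge> y2^m*w^(m+1)*d + L2*(w-y2)*w^m*(y1^m - y2^m)"
    unfolding wM by (rule keyF) (use y10 y21 y2w w0 L d0 rel in auto)
  have Gnn: "y2^m*w^(m+1)*d + L2*(w-y2)*w^m*(y1^m - y2^m) \<ge> 0"
    using y10 y21 y2w w0 L d0 power_mono[OF y21 y10(2), of m] by (intro add_nonneg_nonneg mult_nonneg_nonneg) auto
  have "w*M \<ge> 0" using G Gnn by linarith
  then have M0: "M \<ge> 0" using w0 by (simp add: zero_le_mult_iff)
  have part1: "EE m x1 L1 x2 L2 x3 L3 \<ge> 0" unfolding EEM using M0 L by simp
  have part2: "EE m x1 L1 x2 L2 x3 L3 \<ge> D / (6*16^m*(L1*L2*L3)^2)" if gd: "good x1 L1 x2 L2 x3 L3"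
  proof -
    obtain Lm where Lm: "L1 \<le> Lm" "L2 \<le> Lm" "L3 \<le> Lm"
      "\<bar>x1\<bar> \<ge> Lm/2 \<or> \<bar>x2\<bar> \<ge> Lm/2 \<or> \<bar>x3\<bar> \<ge> Lm/2"
      using gd unfolding good_def by blast
    have XL: "X \<ge> Lm/2" using Lm(4) x X_def by auto
    have wh: "w \<ge> 1/2" using XL Lm L unfolding w_def by (simp add: field_simps)
    have L3f: "L3 * 6 \<ge> L1+L2+L3" using XL Lm xl X_def by linarith
    have y1q: "y1 \<ge> 1/4"
    proof -
      have "y2*L2 \<le> y1*L2" using y21 L by (intro mult_right_mono) auto
      then have "y1*(L1+L2) \<ge> X" using x1e X_def by (simp add: algebra_simps)
      moreover have "y1*(L1+L2) \<le> y1*(2*Lm)" using Lm y10 by (intro mult_left_mono) auto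
      ultimately have "y1*(2*Lm) \<ge> Lm/2" using XL by linarith
      moreover have "Lm > 0" using Lm L by linarith
      ultimately show ?thesis by (simp add: field_simps)
    qed
    define Q where "Q = D/(L1*L2*L3)"
    have Q0: "Q \<ge> 0" using D L by (simp add: Q_def)
    have dQ: "d \<ge> Q/6"
    proof -
      have "D \<le> d*(L1+L2+L3)*L1*L2" using D unfolding d_def by simp
      also have "\<dots> \<le> d*(6*L3)*L1*L2" using d0 L L3f by (intro mult_right_mono mult_left_mono) auto
      finally have "D/(L1*L2*L3) \<le> 6*d" using L by (simp add: field_simps)
      then show ?thesis unfolding Q_def by simp
    qed
    have L2Q: "L2 \<ge> Q"
    proof -
      have "D/(L1*L2*L3) \<le> L1*L2*L2*L3/(L1*L2*L3)" using D L by (intro divide_right_mono) auto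
      then show ?thesis using L unfolding Q_def by simp
    qed
    have br: "y2^m * w^(m+1) / 6 + (w-y2)*w^m*(y1^m - y2^m) \<ge> w / (6*16^m)"
      by (rule bracket) (use y10 y21 y2w wh y1q m1 in auto)
    have t1: "y2^m*w^(m+1)*d \<ge> y2^m*w^(m+1)*(Q/6)"
      using dQ y10 w0 by (intro mult_left_mono) auto
    have t2: "L2*((w-y2)*w^m*(y1^m - y2^m)) \<ge> Q*((w-y2)*w^m*(y1^m - y2^m))"
      using L2Q y2w w0 power_mono[OF y21 y10(2), of m] by (intro mult_right_mono) auto
    have h1: "w*M \<ge> Q*(y2^m * w^(m+1) / 6 + (w-y2)*w^m*(y1^m - y2^m))"
      using G t1 t2 by (simp add: algebra_simps)
    have h2: "Q*(y2^m * w^(m+1) / 6 + (w-y2)*w^m*(y1^m - y2^m)) \<ge> Q*(w / (6*16^m))"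
      using br Q0 by (intro mult_left_mono) auto
    have "w*(Q / (6*16^m)) = Q*(w / (6*16^m))" by simp
    then have "w*M \<ge> w*(Q / (6*16^m))" using h1 h2 by linarith
    then have MQ: "M \<ge> Q / (6*16^m)" using w0 mult_le_cancel_left_pos by blast
    have "EE m x1 L1 x2 L2 x3 L3 \<ge> (Q / (6*16^m)) / (L1*L2*L3)"
      unfolding EEM using MQ L by (intro divide_right_mono) auto
    also have "(Q / (6*16^m)) / (L1*L2*L3) = D / (6*16^m*(L1*L2*L3)^2)"
      unfolding Q_def by (simp add: power2_eq_square)
    finally show ?thesis .
  qed
  show ?thesis using part1 part2 by blast
qed


lemma kk_neg: "odd m \<Longrightarrow> kk m (-x) L = - kk m x L"
  by (simp add: kk_def)

lemma EE_neg: "odd m \<Longrightarrow> EE m (-x1) L1 (-x2) L2 (-x3) L3 = EE m x1 L1 x2 L2 x3 L3"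
  by (simp add: EE_def kk_neg)

lemma EE_sw12: "EE m x2 L2 x1 L1 x3 L3 = EE m x1 L1 x2 L2 x3 L3"
  by (simp add: EE_def algebra_simps)
lemma EE_sw23: "EE m x1 L1 x3 L3 x2 L2 = EE m x1 L1 x2 L2 x3 L3"
  by (simp add: EE_def algebra_simps)

lemma good_sw12: "good x2 L2 x1 L1 x3 L3 = good x1 L1 x2 L2 x3 L3"
  unfolding good_def by blast
lemma good_sw23: "good x1 L1 x3 L3 x2 L2 = good x1 L1 x2 L2 x3 L3"
  unfolding good_def by blast
lemma good_neg: "good (-x1) L1 (-x2) L2 (-x3) L3 = good x1 L1 x2 L2 x3 L3"
  unfolding good_def by simp

definition hyp :: "real \<Rightarrow> real \<Rightarrow> real \<Rightarrow> real \<Rightarrow> real \<Rightarrow> real \<Rightarrow> real \<Rightarrow> bool" where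
  "hyp D x1 L1 x2 L2 x3 L3 \<longleftrightarrow> x1 + x2 + x3 = 0 \<and> 0 < L1 \<and> 0 < L2 \<and> 0 < L3 \<and>
     \<bar>x1\<bar> \<le> L1 \<and> \<bar>x2\<bar> \<le> L2 \<and> \<bar>x3\<bar> \<le> L3 \<and> 0 \<le> D \<and>
     D \<le> (L1+L2-L3)*(L1+L2+L3)*L1*L2 \<and> D \<le> (L2+L3-L1)*(L2+L3+L1)*L2*L3 \<and>
     D \<le> (L1+L3-L2)*(L1+L3+L2)*L1*L3 \<and>
     D \<le> L1*L2*L2*L3 \<and> D \<le> L2*L1*L1*L3 \<and> D \<le> L1*L3*L3*L2"

lemma hyp_sw12: "hyp D x2 L2 x1 L1 x3 L3 = hyp D x1 L1 x2 L2 x3 L3"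
proof -
  have "(L2+L1-L3)*(L2+L1+L3)*L2*L1 = (L1+L2-L3)*(L1+L2+L3)*L1*L2"
       "(L1+L3-L2)*(L1+L3+L2)*L1*L3 = (L1+L3-L2)*(L1+L3+L2)*L1*L3"
       "(L2+L3-L1)*(L2+L3+L1)*L2*L3 = (L2+L3-L1)*(L2+L3+L1)*L2*L3"
       "L2*L1*L1*L3 = L2*L1*L1*L3" "L1*L2*L2*L3 = L1*L2*L2*L3" "L2*L3*L3*L1 = L1*L3*L3*L2"
       "x2 + x1 + x3 = x1 + x2 + x3"
    by (simp_all add: algebra_simps)
  then show ?thesis unfolding hyp_def by (simp only:) blast
qed
lemma hyp_sw23: "hyp D x1 L1 x3 L3 x2 L2 = hyp D x1 L1 x2 L2 x3 L3"
proof -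
  have "(L1+L3-L2)*(L1+L3+L2)*L1*L3 = (L1+L3-L2)*(L1+L3+L2)*L1*L3"
       "(L3+L2-L1)*(L3+L2+L1)*L3*L2 = (L2+L3-L1)*(L2+L3+L1)*L2*L3"
       "(L1+L2-L3)*(L1+L2+L3)*L1*L2 = (L1+L2-L3)*(L1+L2+L3)*L1*L2"
       "L1*L3*L3*L2 = L1*L3*L3*L2" "L3*L1*L1*L2 = L2*L1*L1*L3" "L1*L2*L2*L3 = L1*L2*L2*L3"
       "x1 + x3 + x2 = x1 + x2 + x3"
    by (simp_all add: algebra_simps)
  then show ?thesis unfolding hyp_def by (simp only:) blast
qed
lemma hyp_neg: "hyp D (-x1) L1 (-x2) L2 (-x3) L3 = hyp D x1 L1 x2 L2 x3 L3"
  unfolding hyp_def by auto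

definition concl :: "nat \<Rightarrow> real \<Rightarrow> real \<Rightarrow> real \<Rightarrow> real \<Rightarrow> real \<Rightarrow> real \<Rightarrow> real \<Rightarrow> bool" where
  "concl m D x1 L1 x2 L2 x3 L3 \<longleftrightarrow> EE m x1 L1 x2 L2 x3 L3 \<ge> 0 \<and>
    (good x1 L1 x2 L2 x3 L3 \<longrightarrow> EE m x1 L1 x2 L2 x3 L3 \<ge> D / (6*16^m*(L1*L2*L3)^2))"

lemma concl_sw12: "concl m D x2 L2 x1 L1 x3 L3 = concl m D x1 L1 x2 L2 x3 L3"
proof -
  have "L2*L1*L3 = L1*L2*L3" by simp
  then show ?thesis unfolding concl_def
    using EE_sw12[of m x1 L1 x2 L2 x3 L3] good_sw12[of x1 L1 x2 L2 x3 L3] by (simp only:)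
qed
lemma concl_sw23: "concl m D x1 L1 x3 L3 x2 L2 = concl m D x1 L1 x2 L2 x3 L3"
proof -
  have "L1*L3*L2 = L1*L2*L3" by simp
  then show ?thesis unfolding concl_def
    using EE_sw23[of m x1 L1 x2 L2 x3 L3] good_sw23[of x1 L1 x2 L2 x3 L3] by (simp only:)
qed
lemma concl_neg: "odd m \<Longrightarrow> concl m D (-x1) L1 (-x2) L2 (-x3) L3 = concl m D x1 L1 x2 L2 x3 L3"
  unfolding concl_def by (simp add: EE_neg good_neg)

lemma core1:
  assumes m: "odd m" and h: "hyp D x1 L1 x2 L2 x3 L3" and x: "0 \<le> x1" "0 \<le> x2"
  shows "concl m D x1 L1 x2 L2 x3 L3"
proof (cases "x2 * L1 \<le> x1 * L2")
  case True
  show ?thesis unfolding concl_def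
    by (rule core0) (use m h x True in \<open>auto simp: hyp_def\<close>)
next
  case False
  have "concl m D x2 L2 x1 L1 x3 L3" unfolding concl_def
  proof (rule core0)
    have e: "(L2+L1-L3)*(L2+L1+L3)*L2*L1 = (L1+L2-L3)*(L1+L2+L3)*L1*L2" by (simp add: algebra_simps)
    show "D \<le> (L2+L1-L3)*(L2+L1+L3)*L2*L1" unfolding e using h by (simp add: hyp_def)
    show "D \<le> L2*L1*L1*L3" using h by (simp add: hyp_def)
    show "x1 * L2 \<le> x2 * L1" using False by simp
  qed (use m h x in \<open>auto simp: hyp_def\<close>)
  then show ?thesis by (simp add: concl_sw12)
qed

lemma core2:
  assumes m: "odd m" and h: "hyp D x1 L1 x2 L2 x3 L3"
  shows "concl m D x1 L1 x2 L2 x3 L3"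
proof -
  have h12: "hyp D x2 L2 x1 L1 x3 L3" "hyp D x1 L1 x3 L3 x2 L2"
    using h hyp_sw12[of D x1 L1 x2 L2 x3 L3] hyp_sw23[of D x1 L1 x2 L2 x3 L3] by simp_all
  have h3: "hyp D x2 L2 x3 L3 x1 L1" using h12(1) hyp_sw23[of D x2 L2 x1 L1 x3 L3] by simp
  have c3: "concl m D x2 L2 x3 L3 x1 L1 = concl m D x1 L1 x2 L2 x3 L3"
    using concl_sw12[of m D x2 L2 x1 L1 x3 L3] concl_sw23[of m D x2 L2 x1 L1 x3 L3] by simp
  have cneg: "concl m D (-a) La (-b) Lb (-c) Lc \<Longrightarrow> concl m D a La b Lb c Lc" for a b c La Lb Lc
    using concl_neg[OF m] by simp
  have s: "x3 = -(x1+x2)" using h by (simp add: hyp_def)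
  consider "x1 \<ge> 0" "x2 \<ge> 0" | "x1 \<le> 0" "x2 \<le> 0" | "x1 \<ge> 0" "x3 \<ge> 0" | "x1 \<le> 0" "x3 \<le> 0"
    | "x2 \<ge> 0" "x3 \<ge> 0" | "x2 \<le> 0" "x3 \<le> 0" using s by linarith
  then show ?thesis
  proof cases
    case 1 then show ?thesis using core1[OF m h] by blast
  next
    case 2
    have "hyp D (-x1) L1 (-x2) L2 (-x3) L3" using h hyp_neg by blast
    then have "concl m D (-x1) L1 (-x2) L2 (-x3) L3" using core1[OF m] 2 by simp
    then show ?thesis using cneg by blast
  next
    case 3
    have "concl m D x1 L1 x3 L3 x2 L2" using core1[OF m h12(2)] 3 by blast
    then show ?thesis using concl_sw23 by blast
  next
    case 4
    have "hyp D (-x1) L1 (-x3) L3 (-x2) L2" using h12(2) hyp_neg by blast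
    then have "concl m D (-x1) L1 (-x3) L3 (-x2) L2" using core1[OF m] 4 by simp
    then have "concl m D x1 L1 x3 L3 x2 L2" using cneg by blast
    then show ?thesis using concl_sw23 by blast
  next
    case 5
    have "concl m D x2 L2 x3 L3 x1 L1" using core1[OF m h3] 5 by blast
    then show ?thesis using c3 by blast
  next
    case 6
    have "hyp D (-x2) L2 (-x3) L3 (-x1) L1" using h3 hyp_neg by blast
    then have "concl m D (-x2) L2 (-x3) L3 (-x1) L1" using core1[OF m] 6 by simp
    then have "concl m D x2 L2 x3 L3 x1 L1" using cneg by blast
    then show ?thesis using c3 by blast
  qed
qed


lemma norm2: "norm (x::real^2) = sqrt ((x$1)^2 + (x$2)^2)"
  by (simp add: norm_vec_def L2_set_def sum_2)

lemma norm2sq: "(norm (x::real^2))^2 = (x$1)^2 + (x$2)^2"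
  by (simp add: norm2)

lemma comp_half: "\<bar>(x::real^2)$1\<bar> \<ge> norm x / 2 \<or> \<bar>x$2\<bar> \<ge> norm x / 2"
proof (rule ccontr)
  assume "\<not> ?thesis"
  then have a: "\<bar>x$1\<bar> < norm x / 2" "\<bar>x$2\<bar> < norm x / 2" by auto
  have "\<bar>x$1\<bar>^2 < (norm x/2)^2" "\<bar>x$2\<bar>^2 < (norm x/2)^2"
    using a by (intro power_strict_mono; simp)+
  then have "(x$1)^2 < (norm x/2)^2" "(x$2)^2 < (norm x/2)^2" by simp_all
  then have "(norm x)^2 < (norm x)^2 / 2" using norm2sq[of x] by (simp add: power_divide)
  moreover have "(norm x)^2 \<ge> 0" by simp
  ultimately show False by linarith
qed

lemma geo:
  fixes a b :: "real^2"
  defines "Dl \<equiv> a$1 * b$2 - a$2 * b$1"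
  shows "Dl^2 \<le> (norm a + norm b - norm (a+b)) * (norm a + norm b + norm (a+b)) * norm a * norm b"
    and "\<bar>Dl\<bar> \<le> norm a * norm b"
proof -
  define La where "La = norm a"
  define Lb where "Lb = norm b"
  define Lc where "Lc = norm (a+b)"
  define p where "p = a$1*b$1 + a$2*b$2"
  have sa: "La^2 = (a$1)^2 + (a$2)^2" unfolding La_def by (rule norm2sq)
  have sb: "Lb^2 = (b$1)^2 + (b$2)^2" unfolding Lb_def by (rule norm2sq)
  have sc: "Lc^2 = La^2 + Lb^2 + 2*p" unfolding Lc_def using norm2sq[of "a+b"] sa sb
    by (simp add: p_def power2_eq_square algebra_simps)
  have lag: "Dl^2 + p^2 = La^2 * Lb^2" unfolding sa sb Dl_def p_def
    by (simp add: power2_eq_square algebra_simps)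
  have pos: "La \<ge> 0" "Lb \<ge> 0" "Lc \<ge> 0" by (simp_all add: La_def Lb_def Lc_def)
  have "p^2 \<le> (La*Lb)^2" using lag by (simp add: power_mult_distrib) (smt (verit) zero_le_power2)
  then have pabs: "\<bar>p\<bar> \<le> La*Lb" using pos abs_le_square_iff[of p "La*Lb"] by simp
  have "Dl^2 \<le> (La*Lb)^2" using lag by (simp add: power_mult_distrib) (smt (verit) zero_le_power2)
  then show "\<bar>Dl\<bar> \<le> norm a * norm b" using pos abs_le_square_iff[of Dl "La*Lb"]
    by (simp add: La_def Lb_def)
  have e1: "Dl^2 = (La*Lb - p)*(La*Lb + p)" using lag by (simp add: algebra_simps power2_eq_square)
  have e2: "(La + Lb - Lc)*(La + Lb + Lc) = 2*(La*Lb - p)" using sc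
    by (simp add: algebra_simps power2_eq_square)
  have "(La*Lb - p)*(La*Lb + p) \<le> (La*Lb - p)*(2*(La*Lb))"
    using pabs by (intro mult_left_mono) auto
  also have "\<dots> = (La + Lb - Lc)*(La + Lb + Lc)*La*Lb" using e2 by simp
  finally show "Dl^2 \<le> (norm a + norm b - norm (a+b)) * (norm a + norm b + norm (a+b)) * norm a * norm b"
    using e1 by (simp add: La_def Lb_def Lc_def)
qed


lemma dist_sq2: "(dist (q::real^2) z)^2 = (q$1 - z$1)^2 + (q$2 - z$2)^2"
  by (simp add: dist_norm norm2sq)

lemma circ_real:
  fixes pa pb b1 b2 c1 c2 :: real
  assumes Dd: "Dd = b1*c2 - b2*c1" "Dd \<noteq> 0"
    and e1: "2*(pa*b1+pb*b2) = b1^2+b2^2" and e2: "2*(pa*c1+pb*c2) = c1^2+c2^2"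
  shows "(pa^2+pb^2)*(4*Dd^2) = (b1^2+b2^2)*(c1^2+c2^2)*((b1-c1)^2+(b2-c2)^2)"
proof -
  have "pa*(2*Dd) = c2*(2*(pa*b1+pb*b2)) - b2*(2*(pa*c1+pb*c2))" by (simp add: Dd algebra_simps)
  then have h1: "pa*(2*Dd) = c2*(b1^2+b2^2) - b2*(c1^2+c2^2)" using e1 e2 by simp
  have "pb*(2*Dd) = b1*(2*(pa*c1+pb*c2)) - c1*(2*(pa*b1+pb*b2))" by (simp add: Dd algebra_simps)
  then have h2: "pb*(2*Dd) = b1*(c1^2+c2^2) - c1*(b1^2+b2^2)" using e1 e2 by simp
  have "(pa^2+pb^2)*(4*Dd^2) = (pa*(2*Dd))^2 + (pb*(2*Dd))^2" by (simp add: power2_eq_square algebra_simps)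
  also have "\<dots> = (c2*(b1^2+b2^2) - b2*(c1^2+c2^2))^2 + (b1*(c1^2+c2^2) - c1*(b1^2+b2^2))^2"
    using h1 h2 by simp
  also have "\<dots> = (b1^2+b2^2)*(c1^2+c2^2)*((b1-c1)^2+(b2-c2)^2)"
    by (simp add: power2_eq_square algebra_simps)
  finally show ?thesis .
qed

lemma circ_exists:
  fixes b1 b2 c1 c2 :: real
  assumes Dd: "b1*c2 - b2*c1 \<noteq> 0"
  shows "\<exists>pa pb. 2*(pa*b1+pb*b2) = b1^2+b2^2 \<and> 2*(pa*c1+pb*c2) = c1^2+c2^2"
proof (intro exI conjI)
  define Dd where "Dd = b1*c2 - b2*c1"
  have D0: "Dd \<noteq> 0" using Dd by (simp add: Dd_def)
  define pa where "pa = (c2*(b1^2+b2^2) - b2*(c1^2+c2^2))/(2*Dd)"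
  define pb where "pb = (b1*(c1^2+c2^2) - c1*(b1^2+b2^2))/(2*Dd)"
  have "2*(pa*b1+pb*b2) * Dd = (b1^2+b2^2) * Dd"
    unfolding pa_def pb_def using D0 by (simp add: field_simps) (simp add: Dd_def power2_eq_square algebra_simps)
  then show "2*(pa*b1+pb*b2) = b1^2+b2^2" using D0 by simp
  have "2*(pa*c1+pb*c2) * Dd = (c1^2+c2^2) * Dd"
    unfolding pa_def pb_def using D0 by (simp add: field_simps) (simp add: Dd_def power2_eq_square algebra_simps)
  then show "2*(pa*c1+pb*c2) = c1^2+c2^2" using D0 by simp
qed

lemma noncol_Delta:
  fixes z1 z2 z3 :: "real^2"
  assumes "z1 \<noteq> z2" "\<not> collinear {z1, z2, z3}"
  shows "(z1-z2)$1 * (z2-z3)$2 - (z1-z2)$2 * (z2-z3)$1 \<noteq> 0"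
proof
  assume D0: "(z1-z2)$1 * (z2-z3)$2 - (z1-z2)$2 * (z2-z3)$1 = 0"
  define u where "u = z1 - z2"
  define v where "v = z2 - z3"
  have u0: "u \<noteq> 0" using assms(1) by (simp add: u_def)
  have D: "u$1 * v$2 = u$2 * v$1" using D0 by (simp add: u_def v_def)
  have "\<exists>c. - v = c *\<^sub>R u"
  proof (cases "u$1 = 0")
    case True
    then have "u$2 \<noteq> 0" using u0 by (metis (full_types) exhaust_2 vec_eq_iff zero_index)
    then have "v$1 = 0" using D True by simp
    show ?thesis
    proof (intro exI)
      show "- v = (- (v$2 / u$2)) *\<^sub>R u"
        unfolding vec_eq_iff forall_2 using True \<open>u$2 \<noteq> 0\<close> \<open>v$1 = 0\<close>
        by simp
    qed
  next
    case False
    show ?thesis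
    proof (intro exI)
      have "v$2 = v$1 / u$1 * u$2" using False D by (simp add: field_simps)
      then show "- v = (- (v$1 / u$1)) *\<^sub>R u"
        unfolding vec_eq_iff forall_2 using False by simp
    qed
  qed
  moreover have "z3 - z2 = - v" "z1 - z2 = u" by (simp_all add: u_def v_def)
  ultimately have "collinear {0, z1 - z2, z3 - z2}" using collinear_lemma by metis
  then have "collinear {z1, z2, z3}" using collinear_3[of z1 z2 z3] by simp
  then show False using assms(2) by simp
qed


lemma menger_val:
  fixes z1 z2 z3 :: "real^2"
  assumes d: "z1 \<noteq> z2" and nc: "\<not> collinear {z1, z2, z3}"
  shows "menger_curv z1 z2 z3 =
    2 * \<bar>(z1-z2)$1 * (z2-z3)$2 - (z1-z2)$2 * (z2-z3)$1\<bar> / (norm (z1-z2) * norm (z2-z3) * norm (z3-z1))"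
proof -
  define Dl where "Dl = (z1-z2)$1 * (z2-z3)$2 - (z1-z2)$2 * (z2-z3)$1"
  define b1 where "b1 = z2$1 - z1$1"
  define b2 where "b2 = z2$2 - z1$2"
  define c1 where "c1 = z3$1 - z1$1"
  define c2 where "c2 = z3$2 - z1$2"
  have DdD: "b1*c2 - b2*c1 = Dl" unfolding Dl_def b1_def b2_def c1_def c2_def
    by (simp add: algebra_simps)
  have D0: "Dl \<noteq> 0" unfolding Dl_def using noncol_Delta[OF d nc] .
  define Lu where "Lu = norm (z1-z2)"
  define Lv where "Lv = norm (z2-z3)"
  define Lw where "Lw = norm (z3-z1)"
  have sLu: "Lu^2 = b1^2+b2^2" unfolding Lu_def b1_def b2_def norm2sq
    by (simp add: power2_eq_square algebra_simps)
  have sLw: "Lw^2 = c1^2+c2^2" unfolding Lw_def c1_def c2_def norm2sq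
    by (simp add: power2_eq_square algebra_simps)
  have sLv: "Lv^2 = (b1-c1)^2+(b2-c2)^2" unfolding Lv_def b1_def b2_def c1_def c2_def norm2sq
    by (simp add: power2_eq_square algebra_simps)
  define R0 where "R0 = Lu*Lv*Lw/(2*\<bar>Dl\<bar>)"
  have R0pos: "R0 \<ge> 0" unfolding R0_def Lu_def Lv_def Lw_def by simp
  have uniq: "r = R0" if h: "dist q z1 = r" "dist q z2 = r" "dist q z3 = r" for q r
  proof -
    define pa where "pa = q$1 - z1$1"
    define pb where "pb = q$2 - z1$2"
    have q1: "(dist q z1)^2 = pa^2 + pb^2" unfolding dist_sq2 pa_def pb_def ..
    have q2: "(dist q z2)^2 = (pa-b1)^2 + (pb-b2)^2" unfolding dist_sq2 pa_def pb_def b1_def b2_def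
      by (simp add: algebra_simps)
    have q3: "(dist q z3)^2 = (pa-c1)^2 + (pb-c2)^2" unfolding dist_sq2 pa_def pb_def c1_def c2_def
      by (simp add: algebra_simps)
    have e1: "2*(pa*b1+pb*b2) = b1^2+b2^2" using q1 q2 h by (simp add: power2_eq_square algebra_simps)
    have e2: "2*(pa*c1+pb*c2) = c1^2+c2^2" using q1 q3 h by (simp add: power2_eq_square algebra_simps)
    have "(pa^2+pb^2)*(4*Dl^2) = (b1^2+b2^2)*(c1^2+c2^2)*((b1-c1)^2+(b2-c2)^2)"
      using circ_real[OF DdD[symmetric] D0 e1 e2] .
    then have "r^2 * (4*Dl^2) = (Lu*Lv*Lw)^2" using q1 h sLu sLv sLw
      by (simp add: power_mult_distrib)
    then have "r^2 = (Lu*Lv*Lw)^2 / (4*Dl^2)" using D0 by (simp add: field_simps)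
    also have "\<dots> = R0^2" unfolding R0_def by (simp add: power_divide power_mult_distrib)
    finally have "r^2 = R0^2" .
    moreover have "r \<ge> 0" using h by auto
    ultimately show ?thesis using R0pos by (simp add: power2_eq_iff_nonneg)
  qed
  obtain pa pb where e: "2*(pa*b1+pb*b2) = b1^2+b2^2" "2*(pa*c1+pb*c2) = c1^2+c2^2"
    using circ_exists[of b1 c2 b2 c1] DdD D0 by auto
  define q where "q = z1 + vector [pa, pb]"
  have q1: "(dist q z1)^2 = pa^2 + pb^2" unfolding dist_sq2 q_def by simp
  have q2: "(dist q z2)^2 = (pa-b1)^2 + (pb-b2)^2" unfolding dist_sq2 q_def b1_def b2_def
    by (simp add: algebra_simps)
  have q3: "(dist q z3)^2 = (pa-c1)^2 + (pb-c2)^2" unfolding dist_sq2 q_def c1_def c2_def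
    by (simp add: algebra_simps)
  have "(dist q z2)^2 = (dist q z1)^2" unfolding q1 q2 using e(1)
    by (simp add: power2_eq_square algebra_simps)
  then have dz2: "dist q z2 = dist q z1" by (simp add: power2_eq_iff_nonneg)
  have "(dist q z3)^2 = (dist q z1)^2" unfolding q1 q3 using e(2)
    by (simp add: power2_eq_square algebra_simps)
  then have dz3: "dist q z3 = dist q z1" by (simp add: power2_eq_iff_nonneg)
  have ex: "\<exists>w. dist w z1 = R0 \<and> dist w z2 = R0 \<and> dist w z3 = R0"
  proof -
    have "dist q z1 = R0" using uniq[of q "dist q z1"] dz2 dz3 by simp
    then show ?thesis using dz2 dz3 by auto
  qed
  have THE: "(THE r. \<exists>w. dist w z1 = r \<and> dist w z2 = r \<and> dist w z3 = r) = R0"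
    by (rule the_equality) (use ex uniq in auto)
  show ?thesis unfolding menger_curv_def using nc THE
    by (simp add: R0_def Dl_def Lu_def Lv_def Lw_def)
qed


lemma Kern_kk: "n \<ge> 1 \<Longrightarrow> Kern n i x = kk (2*n-1) (x$i) (norm x)"
proof -
  assume n: "n \<ge> 1"
  have "2*n-1+1 = 2*n" using n by simp
  then show ?thesis by (simp add: Kern_def kk_def)
qed

lemma pK_EE:
  assumes n: "n \<ge> 1"
  shows "pK n i z1 z2 z3 = EE (2*n-1) ((z1-z2)$i) (norm (z1-z2)) ((z2-z3)$i) (norm (z2-z3))
           ((z3-z1)$i) (norm (z3-z1))"
proof -
  have m: "odd (2*n-1)" using n by simp
  have neg: "Kern n i (-x) = - Kern n i x" for x
    using kk_neg[OF m] by (simp add: Kern_kk[OF n])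
  have k: "Kern n i (z1 - z3) = - Kern n i (z3 - z1)" "Kern n i (z2 - z1) = - Kern n i (z1 - z2)"
     "Kern n i (z3 - z2) = - Kern n i (z2 - z3)"
    using neg[of "z3 - z1"] neg[of "z1 - z2"] neg[of "z2 - z3"] by simp_all
  show ?thesis unfolding pK_def k unfolding EE_def Kern_kk[OF n] by (simp add: algebra_simps)
qed

lemma hyp_inst:
  fixes z1 z2 z3 :: "real^2"
  assumes "z1 \<noteq> z2" "z1 \<noteq> z3" "z2 \<noteq> z3"
  shows "hyp (((z1-z2)$1 * (z2-z3)$2 - (z1-z2)$2 * (z2-z3)$1)^2)
           ((z1-z2)$i) (norm (z1-z2)) ((z2-z3)$i) (norm (z2-z3)) ((z3-z1)$i) (norm (z3-z1))"
proof -
  define u where "u = z1 - z2"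
  define v where "v = z2 - z3"
  define w where "w = z3 - z1"
  define Dl where "Dl = u$1 * v$2 - u$2 * v$1"
  have uv: "u + v = -w" "v + w = -u" "u + w = -v" by (simp_all add: u_def v_def w_def)
  have Lp: "norm u > 0" "norm v > 0" "norm w > 0" using assms by (simp_all add: u_def v_def w_def)
  have dvw: "v$1 * w$2 - v$2 * w$1 = Dl" unfolding Dl_def u_def v_def w_def by (simp add: algebra_simps)
  have duw: "u$1 * w$2 - u$2 * w$1 = - Dl" unfolding Dl_def u_def v_def w_def by (simp add: algebra_simps)
  have g1: "Dl^2 \<le> (norm u + norm v - norm w) * (norm u + norm v + norm w) * norm u * norm v"
    "\<bar>Dl\<bar> \<le> norm u * norm v"
    using geo[of u v] uv by (simp_all add: Dl_def)
  have g2: "Dl^2 \<le> (norm v + norm w - norm u) * (norm v + norm w + norm u) * norm v * norm w"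
    "\<bar>Dl\<bar> \<le> norm v * norm w"
    using geo[of v w] uv dvw by simp_all
  have g3: "Dl^2 \<le> (norm u + norm w - norm v) * (norm u + norm w + norm v) * norm u * norm w"
    "\<bar>Dl\<bar> \<le> norm u * norm w"
    using geo[of u w] uv duw by simp_all
  have p1: "Dl^2 \<le> norm u * norm v * norm v * norm w"
  proof -
    have "\<bar>Dl\<bar>*\<bar>Dl\<bar> \<le> (norm u * norm v) * (norm v * norm w)"
      using g1 g2 by (intro mult_mono) auto
    then show ?thesis by (simp add: power2_eq_square mult_ac)
  qed
  have p2: "Dl^2 \<le> norm v * norm u * norm u * norm w"
  proof -
    have "\<bar>Dl\<bar>*\<bar>Dl\<bar> \<le> (norm u * norm v) * (norm u * norm w)"
      using g1 g3 by (intro mult_mono) auto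
    then show ?thesis by (simp add: power2_eq_square mult_ac)
  qed
  have p3: "Dl^2 \<le> norm u * norm w * norm w * norm v"
  proof -
    have "\<bar>Dl\<bar>*\<bar>Dl\<bar> \<le> (norm u * norm w) * (norm v * norm w)"
      using g3 g2 by (intro mult_mono) auto
    then show ?thesis by (simp add: power2_eq_square mult_ac)
  qed
  have s: "u$i + v$i + w$i = 0" by (simp add: u_def v_def w_def)
  have "hyp (Dl^2) (u$i) (norm u) (v$i) (norm v) (w$i) (norm w)"
    unfolding hyp_def
    using s Lp g1(1) g2(1) g3(1) p1 p2 p3 component_le_norm_cart[of u i] component_le_norm_cart[of v i]
      component_le_norm_cart[of w i]
    by simp
  then show ?thesis by (simp add: u_def v_def w_def Dl_def)
qed


theorem lemma2p1:
  fixes n :: nat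
  assumes "n \<ge> 1"
  shows "\<exists>c1 > 0. \<forall>z1 z2 z3 :: real^2. z1 \<noteq> z2 \<and> z1 \<noteq> z3 \<and> z2 \<noteq> z3 \<longrightarrow>
           pK n 1 z1 z2 z3 + pK n 2 z1 z2 z3 \<ge> c1 * (menger_curv z1 z2 z3)^2"
proof -
  define m where "m = 2*n-1"
  have m: "odd m" using assms by (simp add: m_def)
  define c1 :: real where "c1 = 1/(24*16^m)"
  have c1p: "c1 > 0" by (simp add: c1_def)
  have main: "pK n 1 z1 z2 z3 + pK n 2 z1 z2 z3 \<ge> c1 * (menger_curv z1 z2 z3)^2"
    if dz: "z1 \<noteq> z2" "z1 \<noteq> z3" "z2 \<noteq> z3" for z1 z2 z3 :: "real^2"
  proof -
    define u where "u = z1 - z2"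
    define v where "v = z2 - z3"
    define w where "w = z3 - z1"
    define D where "D = ((z1-z2)$1 * (z2-z3)$2 - (z1-z2)$2 * (z2-z3)$1)^2"
    define E where "E i = EE m (u$i) (norm u) (v$i) (norm v) (w$i) (norm w)" for i
    have pE: "pK n i z1 z2 z3 = E i" for i
      unfolding E_def u_def v_def w_def m_def using pK_EE[OF assms] by simp
    have C: "concl m D (u$i) (norm u) (v$i) (norm v) (w$i) (norm w)" for i
      using core2[OF m hyp_inst[OF dz, of i]] by (simp add: D_def u_def v_def w_def)
    have E0: "E i \<ge> 0" for i using C[of i] by (simp add: concl_def E_def)
    show ?thesis
    proof (cases "collinear {z1, z2, z3}")
      case True
      then have "menger_curv z1 z2 z3 = 0" by (simp add: menger_curv_def)
      then show ?thesis using E0[of 1] E0[of 2] by (simp add: pE)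
    next
      case False
      have mc: "menger_curv z1 z2 z3 =
        2 * \<bar>(z1-z2)$1 * (z2-z3)$2 - (z1-z2)$2 * (z2-z3)$1\<bar> / (norm u * norm v * norm w)"
        using menger_val[OF dz(1) False] by (simp add: u_def v_def w_def)
      have Lp: "norm u > 0" "norm v > 0" "norm w > 0" using dz by (simp_all add: u_def v_def w_def)
      have rhs: "c1 * (menger_curv z1 z2 z3)^2 = D / (6*16^m*(norm u * norm v * norm w)^2)"
        unfolding mc c1_def D_def by (simp add: power_divide power_mult_distrib)
      define Lm where "Lm = max (norm u) (max (norm v) (norm w))"
      have Lm: "norm u \<le> Lm" "norm v \<le> Lm" "norm w \<le> Lm" by (simp_all add: Lm_def)
      have gd: "\<exists>i\<in>{1,2}. good (u$i) (norm u) (v$i) (norm v) (w$i) (norm w)"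
      proof -
        have "Lm = norm u \<or> Lm = norm v \<or> Lm = norm w" unfolding Lm_def by linarith
        then obtain e where e: "e \<in> {u,v,w}" "norm e = Lm" by blast
        have "\<exists>i\<in>{1,2::2}. \<bar>e$i\<bar> \<ge> Lm/2" using comp_half[of e] e(2) by auto
        then obtain i where i: "i \<in> {1,2::2}" "\<bar>e$i\<bar> \<ge> Lm/2" by blast
        have "good (u$i) (norm u) (v$i) (norm v) (w$i) (norm w)"
          unfolding good_def using Lm i(2) e(1) by blast
        then show ?thesis using i(1) by blast
      qed
      then obtain i where i: "i \<in> {1,2::2}" "good (u$i) (norm u) (v$i) (norm v) (w$i) (norm w)" by blast
      have Ei: "E i \<ge> c1 * (menger_curv z1 z2 z3)^2"
        using C[of i] i(2) unfolding rhs by (simp add: concl_def E_def)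
      show ?thesis using i(1) Ei E0[of 1] E0[of 2] by (auto simp: pE)
    qed
  qed
  show ?thesis using c1p main by blast
qed


end
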